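(* Let $N\geq 3$ be an odd integer. For real $\theta$ and $\varepsilon\geq 0$ let $G_\theta(\varepsilon)=(1+\theta)^N+\big(1-\theta(1+\varepsilon)\big)^N-2$ and $\varepsilon_c(\theta)=\inf\{\varepsilon>0: G_\theta(\varepsilon)\leq 0\}$ (with $\inf\emptyset=+\infty$). For positive $\theta\neq 2^{1/N}-1$ define $$f(\theta)=\big(2-(1+\theta)^N\big)^{1/N}-1+\theta(1+\theta)^{N-1}\big(2-(1+\theta)^N\big)^{\frac1N-1}.$$ Then on the interval $\theta>2^{1/N}-1$ the function $\varepsilon_c$ is differentiable with derivative $$\varepsilon_c'(\theta)=\frac{f(\theta)}{\theta^2},$$ and $\varepsilon_c$ has a unique stationary point in this interval, at which it attains its maximum value over the interval $\theta>2^{1/N}-1$ (being increasing before this point and decreasing after it).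
   Context: Root convention: for real $X>0$, $X^{1/N}$ is the positive real $N$-th root; for $X<0$ and $N$ odd, $X^{1/N}=-|X|^{1/N}$; and for an integer $m$, $X^{1/N-m}$ is defined as $Y^{1/N}$ with $Y=X^{1-mN}$, evaluated by the same convention. For $\theta>2^{1/N}-1$ one has $2-(1+\theta)^N<0$, so these conventions are in force; in this range $\varepsilon_c(\theta)=\frac{1-(2-(1+\theta)^N)^{1/N}}{\theta}-1$. *)

theory Defs
  imports "HOL-Analysis.Analysis" "HOL-Library.Extended_Real"
begin

text \<open>Real N-th root with the odd-root convention: Isabelle's root is sign-preserving,
  so for odd N, root N X = -(root N |X|) when X < 0.\<close>

definition G :: "nat \<Rightarrow> real \<Rightarrow> real \<Rightarrow> real" where
  "G N \<theta> \<epsilon> = (1 + \<theta>) ^ N + (1 - \<theta> * (1 + \<epsilon>)) ^ N - 2"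

definition eps_c :: "nat \<Rightarrow> real \<Rightarrow> ereal" where
  "eps_c N \<theta> = Inf (ereal ` {\<epsilon>. \<epsilon> > 0 \<and> G N \<theta> \<epsilon> \<le> 0})"

text \<open>X^(1/N - 1) is read as (X^(1-N))^(1/N) = root N (1 / X^(N-1)).\<close>
definition f :: "nat \<Rightarrow> real \<Rightarrow> real" where
  "f N \<theta> = root N (2 - (1 + \<theta>) ^ N) - 1
     + \<theta> * (1 + \<theta>) ^ (N - 1) * root N (1 / (2 - (1 + \<theta>) ^ N) ^ (N - 1))"

end

theory Submission
  imports Defs
begin

definition Qf :: "nat \<Rightarrow> real \<Rightarrow> real" where
  "Qf N \<theta> = root N ((1 + \<theta>) ^ N - 2)"
definition hf :: "nat \<Rightarrow> real \<Rightarrow> real" where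
  "hf N \<theta> = 2 - (1 + \<theta>) ^ (N - 1) - (Qf N \<theta>) ^ (N - 1)"
definition Ef :: "nat \<Rightarrow> real \<Rightarrow> real" where
  "Ef N \<theta> = (1 + Qf N \<theta>) / \<theta> - 1"

lemma L1: assumes "N \<ge> 3" shows "1 < root N 2" "root N 2 < 2"
proof -
  show "1 < root N 2" using assms by simp
  show "root N 2 < 2"
  proof (rule ccontr)
    assume "\<not> root N 2 < 2"
    hence "(2::real) ^ N \<le> root N 2 ^ N" by (intro power_mono) auto
    also have "\<dots> = 2" using assms by simp
    finally have "(2::real)^N \<le> 2" .
    moreover have "(2::real)^1 < 2^N" using assms by (intro power_strict_increasing) auto
    ultimately show False by simp
  qed
qed

lemma L2: assumes "N \<ge> 3" "\<theta> > root N 2 - 1" shows "(1+\<theta>)^N > 2" "\<theta> > 0"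
proof -
  have r: "1 < root N 2" using L1 assms by auto
  have "root N 2 ^ N < (1+\<theta>)^N" using assms r by (intro power_strict_mono) auto
  thus "(1+\<theta>)^N > 2" using assms by simp
  show "\<theta> > 0" using r assms by linarith
qed

lemma superadd: "(b::real) \<ge> 0 \<Longrightarrow> (b + 2) ^ Suc n \<ge> b ^ Suc n + 2 ^ Suc n"
proof (induction n)
  case 0 then show ?case by simp
next
  case (Suc n)
  have "(b+2)^Suc (Suc n) = (b+2) * (b+2)^Suc n" by simp
  also have "\<dots> \<ge> (b+2) * (b^Suc n + 2^Suc n)" using Suc by (intro mult_left_mono) auto
  also have "(b+2) * (b^Suc n + 2^Suc n) = b^Suc (Suc n) + 2^Suc (Suc n) + (2*b^Suc n + b*2^Suc n)"
    by (simp add: algebra_simps)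
  also have "\<dots> \<ge> b^Suc (Suc n) + 2^Suc (Suc n)" using Suc.prems by simp
  finally show ?case .
qed

lemma Qpos: assumes "N \<ge> 3" "\<theta> > root N 2 - 1" shows "Qf N \<theta> > 0"
  using L2[OF assms] assms unfolding Qf_def by simp

lemma Qpow: assumes "N \<ge> 3" "\<theta> > root N 2 - 1" shows "Qf N \<theta> ^ N = (1+\<theta>)^N - 2"
  using L2[OF assms] assms unfolding Qf_def by simp

lemma Epos: assumes "odd N" "N \<ge> 3" "\<theta> > root N 2 - 1" shows "Ef N \<theta> > 0"
proof -
  have t: "\<theta> > 0" using L2 assms by auto
  have q: "Qf N \<theta> > 0" using Qpos assms by auto
  have "Qf N \<theta> > \<theta> - 1"
  proof (cases "\<theta> \<le> 1")
    case True then show ?thesis using q by simp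
  next
    case False
    have "(\<theta>-1)^N + 2 < (\<theta>-1)^N + 2^N"
      using assms by (simp add: power_strict_increasing_iff[of 2 1 N, simplified])
    also have "\<dots> \<le> (\<theta> - 1 + 2)^N" using False superadd[of "\<theta>-1" "N-1"] assms by simp
    finally have "(\<theta>-1)^N < Qf N \<theta> ^ N" using Qpow[OF assms(2,3)] by (simp add: algebra_simps)
    thus ?thesis using q by (meson power_less_imp_less_base less_le)
  qed
  thus ?thesis unfolding Ef_def using t by (simp add: field_simps)
qed

lemma oddpow_le: assumes "odd N" shows "(x::real)^N \<le> y^N \<longleftrightarrow> x \<le> y"
proof -
  have "0 < N" using assms by (simp add: odd_pos)
  hence "x^N \<le> y^N \<longleftrightarrow> root N (x^N) \<le> root N (y^N)" by simp
  thus ?thesis using assms by (simp add: odd_real_root_power_cancel)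
qed

lemma eps_eq: assumes "odd N" "N \<ge> 3" "\<theta> > root N 2 - 1"
  shows "eps_c N \<theta> = ereal (Ef N \<theta>)"
proof -
  have t: "\<theta> > 0" using L2 assms by auto
  have e: "Ef N \<theta> > 0" using Epos assms by auto
  have key: "G N \<theta> \<epsilon> \<le> 0 \<longleftrightarrow> Ef N \<theta> \<le> \<epsilon>" for \<epsilon>
  proof -
    have "G N \<theta> \<epsilon> \<le> 0 \<longleftrightarrow> (1 - \<theta>*(1+\<epsilon>))^N \<le> (- Qf N \<theta>)^N"
      unfolding G_def using Qpow[OF assms(2,3)] assms(1) by (simp add: power_minus_odd) argo
    also have "\<dots> \<longleftrightarrow> 1 - \<theta>*(1+\<epsilon>) \<le> - Qf N \<theta>" using oddpow_le[OF assms(1)] by blast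
    also have "\<dots> \<longleftrightarrow> Ef N \<theta> \<le> \<epsilon>" unfolding Ef_def using t
      by (simp add: field_simps)
    finally show ?thesis .
  qed
  have S: "{\<epsilon>. \<epsilon> > 0 \<and> G N \<theta> \<epsilon> \<le> 0} = {Ef N \<theta>..}" using key e by auto
  show ?thesis unfolding eps_c_def S
  proof (rule antisym)
    show "Inf (ereal ` {Ef N \<theta>..}) \<le> ereal (Ef N \<theta>)" by (rule Inf_lower) auto
    show "ereal (Ef N \<theta>) \<le> Inf (ereal ` {Ef N \<theta>..})" by (rule Inf_greatest) auto
  qed
qed

lemma f_eq: assumes "odd N" "N \<ge> 3" "\<theta> > root N 2 - 1"
  shows "f N \<theta> = \<theta> * (1+\<theta>)^(N-1) / Qf N \<theta> ^ (N-1) - 1 - Qf N \<theta>"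
proof -
  have N0: "0 < N" using assms by simp
  have ev: "even (N-1)" using assms by simp
  have r: "root N (2 - (1+\<theta>)^N) = - Qf N \<theta>" unfolding Qf_def
    using real_root_minus[of N "(1+\<theta>)^N - 2"] by simp
  have "root N (1 / (2 - (1+\<theta>)^N)^(N-1)) = 1 / (- Qf N \<theta>)^(N-1)"
    by (simp add: real_root_divide real_root_power N0 r)
  also have "\<dots> = 1 / Qf N \<theta> ^(N-1)" using ev by simp
  finally show ?thesis unfolding f_def r by simp
qed

lemma E_deriv: assumes "odd N" "N \<ge> 3" "\<theta> > root N 2 - 1"
  shows "(Ef N has_real_derivative (f N \<theta> / \<theta>\<^sup>2)) (at \<theta>)"
proof -
  have N0: "0 < N" using assms by simp
  have t: "\<theta> > 0" and s: "(1+\<theta>)^N > 2" using L2 assms by auto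
  have q: "Qf N \<theta> > 0" using Qpos assms by auto
  have d1: "((\<lambda>x. (1+x)^N - 2) has_real_derivative (real N * (1+\<theta>)^(N-1))) (at \<theta>)"
    by (auto intro!: derivative_eq_intros)
  have d2: "((\<lambda>x. root N ((1+x)^N - 2)) has_real_derivative
     (inverse (real N * root N ((1+\<theta>)^N - 2) ^ (N - Suc 0)) * (real N * (1+\<theta>)^(N-1)))) (at \<theta>)"
    using DERIV_chain2[OF DERIV_real_root[of N "(1+\<theta>)^N-2"] d1] N0 s by simp
  have dQ: "(Qf N has_real_derivative ((1+\<theta>)^(N-1) / Qf N \<theta> ^ (N-1))) (at \<theta>)"
  proof -
    have QQ: "Qf N = (\<lambda>x. root N ((1+x)^N - 2))" by (rule ext) (simp add: Qf_def)
    show ?thesis unfolding QQ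
      apply (rule DERIV_cong[OF d2])
      using N0 by (simp add: Qf_def field_simps)
  qed
  have dE: "(Ef N has_real_derivative
     ((0 + (1+\<theta>)^(N-1) / Qf N \<theta> ^ (N-1)) * \<theta> - (1 + Qf N \<theta>) * 1) / (\<theta> * \<theta>) - 0) (at \<theta>)"
    unfolding Ef_def[abs_def]
    by (intro DERIV_diff DERIV_divide DERIV_add DERIV_const dQ DERIV_ident) (use t in simp)
  show ?thesis
    apply (rule DERIV_cong[OF dE])
    unfolding f_eq[OF assms] using t q by (simp add: field_simps power2_eq_square)
qed

lemma fh: assumes "odd N" "N \<ge> 3" "\<theta> > root N 2 - 1"
  shows "f N \<theta> * Qf N \<theta> ^ (N-1) = hf N \<theta>"
proof -
  have q: "Qf N \<theta> > 0" using Qpos assms by auto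
  have N1: "N = Suc (N-1)" using assms by simp
  have a: "Qf N \<theta> * Qf N \<theta> ^ (N-1) = (1+\<theta>)^N - 2"
    using Qpow[OF assms(2,3)] N1 by (metis power_Suc)
  have b: "(1+\<theta>)^N = (1+\<theta>) * (1+\<theta>)^(N-1)" using N1 by (metis power_Suc)
  define P where "P = Qf N \<theta> ^ (N-1)"
  have P0: "P \<noteq> 0" unfolding P_def using q by simp
  have "f N \<theta> * P = \<theta> * (1+\<theta>)^(N-1) - P - Qf N \<theta> * P"
    unfolding f_eq[OF assms] P_def[symmetric] using P0 by (simp add: field_simps)
  also have "\<dots> = hf N \<theta>" unfolding hf_def P_def[symmetric] using a b unfolding P_def[symmetric]
    by (simp add: algebra_simps)
  finally show ?thesis unfolding P_def .
qed

lemma h_mono: assumes "N \<ge> 3" "root N 2 - 1 \<le> a" "a < b"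
  shows "hf N b < hf N a"
proof -
  have r: "1 < root N 2" using L1 assms by auto
  have N0: "0 < N" using assms by simp
  have sa: "(1+a)^N \<ge> 2"
  proof -
    have "root N 2 ^ N \<le> (1+a)^N" using assms r by (intro power_mono; linarith)
    thus ?thesis using N0 by simp
  qed
  have sab: "(1+a)^N \<le> (1+b)^N" using assms r by (intro power_mono; linarith)
  have a0: "0 \<le> 1 + a" using assms r by linarith
  have p1: "(1+a)^(N-1) < (1+b)^(N-1)" using assms a0 by (intro power_strict_mono) auto
  have qa: "Qf N a \<ge> 0" unfolding Qf_def using sa N0 by simp
  have qab: "Qf N a \<le> Qf N b" unfolding Qf_def using sab N0 by simp
  have p2: "Qf N a ^(N-1) \<le> Qf N b ^ (N-1)" using qa qab by (intro power_mono) auto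
  show ?thesis unfolding hf_def using p1 p2 by simp
qed

lemma h_t0: assumes "N \<ge> 3" shows "hf N (root N 2 - 1) > 0"
proof -
  have r: "1 < root N 2" using L1 assms by auto
  have N0: "0 < N" using assms by simp
  have N1: "N = Suc (N-1)" using assms by simp
  have "root N 2 ^ (N-1) < root N 2 * root N 2 ^ (N-1)"
    using r by simp
  also have "\<dots> = 2" using N1 N0 by (metis power_Suc real_root_pow_pos2 zero_le_numeral)
  finally have A: "root N 2 ^ (N-1) < 2" .
  have B: "(0::real)^(N-1) = 0" using assms by simp
  have Q0: "Qf N (root N 2 - 1) = 0" unfolding Qf_def using N0 by simp
  have k: "N - 1 = Suc (N - 2)" using assms by simp
  show ?thesis unfolding hf_def Q0 using A unfolding k by simp
qed

lemma h_1: assumes "N \<ge> 3" shows "hf N 1 < 0"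
proof -
  have N0: "0 < N" using assms by simp
  have "(2::real)^1 < 2^(N-1)" using assms by (intro power_strict_increasing) auto
  moreover have "Qf N 1 ^ (N-1) \<ge> 0" unfolding Qf_def using N0
  proof -
    have "(2::real)^1 \<le> 2^N" using assms by (intro power_increasing) auto
    thus "0 \<le> root N ((1 + 1) ^ N - 2) ^ (N - 1)" using N0 by simp
  qed
  ultimately show ?thesis unfolding hf_def by simp
qed

lemma h_cont: "continuous_on A (hf N)"
  unfolding hf_def[abs_def] Qf_def by (intro continuous_intros)

lemma h_root: assumes "N \<ge> 3" shows "\<exists>x. root N 2 - 1 < x \<and> hf N x = 0"
proof -
  have "root N 2 - 1 \<le> 1" using L1(2)[OF assms] by linarith
  then obtain x where x: "root N 2 - 1 \<le> x" "x \<le> 1" "hf N x = 0"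
    using IVT2'[of "hf N" 1 0 "root N 2 - 1", OF less_imp_le[OF h_1[OF assms]]
        less_imp_le[OF h_t0[OF assms]] _ h_cont] by blast
  moreover have "x \<noteq> root N 2 - 1" using x h_t0[OF assms] by auto
  ultimately show ?thesis by (intro exI[of _ x]) auto
qed

theorem lemma3:
  fixes N :: nat
  assumes "odd N" and "N \<ge> 3"
  defines "t0 \<equiv> root N 2 - 1"
  defines "ec \<equiv> (\<lambda>\<theta>. real_of_ereal (eps_c N \<theta>))"
  shows "(\<forall>\<theta>>t0. \<bar>eps_c N \<theta>\<bar> \<noteq> \<infinity> \<and>
            (ec has_real_derivative (f N \<theta> / \<theta>\<^sup>2)) (at \<theta>))
       \<and> (\<exists>!\<theta>0. \<theta>0 > t0 \<and> (ec has_real_derivative 0) (at \<theta>0))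
       \<and> (\<forall>\<theta>0. \<theta>0 > t0 \<and> (ec has_real_derivative 0) (at \<theta>0) \<longrightarrow>
            (\<forall>\<theta>>t0. ec \<theta> \<le> ec \<theta>0)
          \<and> (\<forall>a b. t0 < a \<and> a < b \<and> b \<le> \<theta>0 \<longrightarrow> ec a < ec b)
          \<and> (\<forall>a b. \<theta>0 \<le> a \<and> a < b \<longrightarrow> ec a > ec b))"
proof -
  have r: "1 < root N 2" using L1 assms by auto
  have tpos: "\<And>\<theta>. \<theta> > t0 \<Longrightarrow> \<theta> > 0" using r unfolding t0_def by linarith
  have fin: "\<And>\<theta>. \<theta> > t0 \<Longrightarrow> eps_c N \<theta> = ereal (Ef N \<theta>)"
    using eps_eq assms unfolding t0_def by blast
  have ecE: "\<And>\<theta>. \<theta> > t0 \<Longrightarrow> ec \<theta> = Ef N \<theta>" unfolding ec_def using fin by simp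
  have D: "\<And>\<theta>. \<theta> > t0 \<Longrightarrow> (ec has_real_derivative (f N \<theta> / \<theta>\<^sup>2)) (at \<theta>)"
  proof -
    fix \<theta> assume th: "\<theta> > t0"
    show "(ec has_real_derivative (f N \<theta> / \<theta>\<^sup>2)) (at \<theta>)"
      apply (rule has_field_derivative_transform_within_open[of _ _ _ "{t0<..}"])
      using E_deriv[OF assms(1,2)] th ecE unfolding t0_def by auto
  qed
  have sgn: "\<And>\<theta>. \<theta> > t0 \<Longrightarrow> sgn (f N \<theta> / \<theta>\<^sup>2) = sgn (hf N \<theta>)"
  proof -
    fix \<theta> assume th: "\<theta> > t0"
    have q: "Qf N \<theta> ^ (N-1) > 0" using Qpos[OF assms(2)] th unfolding t0_def by simp
    have "hf N \<theta> = f N \<theta> * Qf N \<theta> ^ (N-1)" using fh assms th unfolding t0_def by simp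
    have qq: "Qf N \<theta> > 0" using Qpos[OF assms(2)] th unfolding t0_def by simp
    thus "sgn (f N \<theta> / \<theta>\<^sup>2) = sgn (hf N \<theta>)" using q qq tpos[OF th] \<open>hf N \<theta> = _\<close>
      by (simp add: sgn_mult)
  qed
  have pos: "\<And>\<theta>. \<theta> > t0 \<Longrightarrow> hf N \<theta> > 0 \<Longrightarrow> f N \<theta> / \<theta>\<^sup>2 > 0"
    using sgn by (metis sgn_greater)
  have neg: "\<And>\<theta>. \<theta> > t0 \<Longrightarrow> hf N \<theta> < 0 \<Longrightarrow> f N \<theta> / \<theta>\<^sup>2 < 0"
    using sgn by (metis sgn_less)
  have zero: "\<And>\<theta>. \<theta> > t0 \<Longrightarrow> (ec has_real_derivative 0) (at \<theta>) \<longleftrightarrow> hf N \<theta> = 0"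
  proof -
    fix \<theta> assume th: "\<theta> > t0"
    have "(ec has_real_derivative 0) (at \<theta>) \<longleftrightarrow> f N \<theta> / \<theta>\<^sup>2 = 0"
      using D[OF th] DERIV_unique by (metis)
    also have "\<dots> \<longleftrightarrow> hf N \<theta> = 0" using sgn[OF th] by (metis sgn_0_0)
    finally show "(ec has_real_derivative 0) (at \<theta>) \<longleftrightarrow> hf N \<theta> = 0" .
  qed
  have hm: "\<And>a b. t0 \<le> a \<Longrightarrow> a < b \<Longrightarrow> hf N b < hf N a"
    using h_mono assms unfolding t0_def by blast
  obtain ts where ts: "ts > t0" "hf N ts = 0" using h_root[OF assms(2)] unfolding t0_def by blast
  have cont: "\<And>a b. t0 < a \<Longrightarrow> continuous_on {a..b} ec"
  proof (intro continuous_at_imp_continuous_on ballI)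
    fix a b x :: real assume "t0 < a" "x \<in> {a..b}"
    hence "x > t0" by auto
    thus "isCont ec x" by (rule DERIV_isCont[OF D])
  qed
  have part3: "(\<forall>\<theta>>t0. ec \<theta> \<le> ec \<theta>0)
          \<and> (\<forall>a b. t0 < a \<and> a < b \<and> b \<le> \<theta>0 \<longrightarrow> ec a < ec b)
          \<and> (\<forall>a b. \<theta>0 \<le> a \<and> a < b \<longrightarrow> ec a > ec b)"
    if th0: "\<theta>0 > t0" "hf N \<theta>0 = 0" for \<theta>0
  proof -
    have inc: "ec a < ec b" if "t0 < a" "a < b" "b \<le> \<theta>0" for a b
    proof (rule DERIV_pos_imp_increasing_open[OF that(2) _ cont[OF that(1)]])
      fix x assume x: "a < x" "x < b"
      have "hf N x > 0" using hm[of x \<theta>0] x that th0 by auto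
      thus "\<exists>y. DERIV ec x :> y \<and> y > 0" using D pos x that by (meson less_trans)
    qed
    have dec: "ec a > ec b" if "\<theta>0 \<le> a" "a < b" for a b
    proof (rule DERIV_neg_imp_decreasing_open[OF that(2) _ cont])
      show "t0 < a" using that th0 by auto
      fix x assume x: "a < x" "x < b"
      have "hf N x < 0" using hm[of \<theta>0 x] x that th0 by auto
      moreover have xt: "x > t0" using x that th0 by linarith
      ultimately show "\<exists>y. DERIV ec x :> y \<and> y < 0" using D[OF xt] neg[OF xt] by blast
    qed
    have mx: "ec \<theta> \<le> ec \<theta>0" if "\<theta> > t0" for \<theta>
    proof (cases "\<theta> < \<theta>0")
      case True then show ?thesis using inc[of \<theta> \<theta>0] that by auto
    next
      case False
      then show ?thesis using dec[of \<theta>0 \<theta>] by (cases "\<theta> = \<theta>0") auto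
    qed
    show ?thesis using inc dec mx by blast
  qed
  have P1: "\<forall>\<theta>>t0. \<bar>eps_c N \<theta>\<bar> \<noteq> \<infinity> \<and> (ec has_real_derivative (f N \<theta> / \<theta>\<^sup>2)) (at \<theta>)"
    using fin D by simp
  have P2: "\<exists>!\<theta>0. \<theta>0 > t0 \<and> (ec has_real_derivative 0) (at \<theta>0)"
  proof (rule ex1I[of _ ts])
    show "ts > t0 \<and> (ec has_real_derivative 0) (at ts)" using ts zero by blast
  next
    fix y assume y: "y > t0 \<and> (ec has_real_derivative 0) (at y)"
    hence hy: "hf N y = 0" using zero by blast
    show "y = ts"
    proof (rule ccontr)
      assume "y \<noteq> ts"
      hence "y < ts \<or> ts < y" by linarith
      thus False using hm[of y ts] hm[of ts y] hy ts y by auto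
    qed
  qed
  have P3: "\<forall>\<theta>0. \<theta>0 > t0 \<and> (ec has_real_derivative 0) (at \<theta>0) \<longrightarrow>
            (\<forall>\<theta>>t0. ec \<theta> \<le> ec \<theta>0)
          \<and> (\<forall>a b. t0 < a \<and> a < b \<and> b \<le> \<theta>0 \<longrightarrow> ec a < ec b)
          \<and> (\<forall>a b. \<theta>0 \<le> a \<and> a < b \<longrightarrow> ec a > ec b)"
    using part3 zero by blast
  show ?thesis using P1 P2 P3 by blast
qed

end
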